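(* Under the hypotheses of Lemma 1 (finite multi-set $\mathcal X=\{X_1,\dots,X_n\}$ of real symmetric $2\times2$ matrices, $\lambda_1$ the unique largest eigenvalue of $\mathcal X$, belonging to $X_1$, with $u_1=e_1$, $v_1=e_2$), the largest eigenvalue of $\frac1m\log E_m$, where $E_m=\sum_{i=1}^n\exp(mX_i)$, converges to $\lambda_1$ as $m\to\infty$. Consequently $e_1$ is an eigenvector of $S=\lim_{m\to\infty}\frac1m\log E_m$ with eigenvalue $\lambda_1$.
   Context: $\exp$ and $\log$ denote the matrix exponential and the matrix logarithm of a symmetric positive definite matrix. Every real symmetric $2\times2$ matrix $X_i$ is written in spectral form $X_i=\lambda_i u_iu_i^{\mathsf T}+\mu_i v_iv_i^{\mathsf T}$ with $\lambda_i\ge\mu_i$, $u_i=(\cos\varphi_i,\sin\varphi_i)^{\mathsf T}$, $v_i=(-\sin\varphi_i,\cos\varphi_i)^{\mathsf T}$, $\varphi_i\in[-\pi/2,\pi/2]$. "The eigenvalues of $\mathcal X$" means the multi-set of all $2n$ numbers $\lambda_1,\mu_1,\dots,\lambda_n,\mu_n$; an eigenvalue is unique if it occurs exactly once in this multi-set. $e_1=(1,0)^{\mathsf T}$, $e_2=(0,1)^{\mathsf T}$. *)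

theory Defs
  imports "HOL-Analysis.Analysis" "HOL-Library.Multiset"
begin

fun mpow :: "real^2^2 \<Rightarrow> nat \<Rightarrow> real^2^2" where
  "mpow A 0 = mat 1"
| "mpow A (Suc k) = A ** mpow A k"

definition mexp :: "real^2^2 \<Rightarrow> real^2^2" where
  "mexp A = (\<Sum>k. (1 / fact k) *\<^sub>R mpow A k)"

definition mlog :: "real^2^2 \<Rightarrow> real^2^2" where
  "mlog A = (THE B. transpose B = B \<and> mexp B = A)"

definition lmax :: "real^2^2 \<Rightarrow> real" where
  "lmax A = Max {c. \<exists>x. x \<noteq> 0 \<and> A *v x = c *\<^sub>R x}"

definition outer :: "real^2 \<Rightarrow> real^2 \<Rightarrow> real^2^2" where
  "outer x y = (\<chi> i j. x $ i * y $ j)"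

definition uvec :: "real \<Rightarrow> real^2" where
  "uvec \<phi> = vector [cos \<phi>, sin \<phi>]"

definition vvec :: "real \<Rightarrow> real^2" where
  "vvec \<phi> = vector [- sin \<phi>, cos \<phi>]"

definition e1 :: "real^2" where "e1 = vector [1, 0]"
definition e2 :: "real^2" where "e2 = vector [0, 1]"

end

theory Submission imports Defs begin

lemma inner2: "(x::real^2) \<bullet> y = x$1*y$1 + x$2*y$2"
  by (simp add: inner_vec_def sum_2)

lemma outer_mv: "outer u w *v x = (w \<bullet> x) *\<^sub>R u"
  by (simp add: vec_eq_iff outer_def matrix_vector_mult_def inner_vec_def sum_distrib_left mult_ac)

lemma mm_outer: "B ** outer u w = outer (B *v u) w"
  by (simp add: vec_eq_iff outer_def matrix_matrix_mult_def matrix_vector_mult_def sum_distrib_left mult_ac)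

lemma outer_scale: "outer (c *\<^sub>R u) w = c *\<^sub>R outer u w"
  by (simp add: vec_eq_iff outer_def)

lemma transpose_outer: "transpose (outer u u) = outer u u"
  by (simp add: vec_eq_iff outer_def transpose_def mult_ac)

definition rot :: "real^2 \<Rightarrow> real^2" where "rot w = vector [- (w$2), w$1]"

lemma rot_rot: "rot u \<bullet> rot u = u \<bullet> u" by (simp add: rot_def inner2)
lemma u_rot: "u \<bullet> rot u = 0" "rot u \<bullet> u = 0" by (simp_all add: rot_def inner2)
lemma rot_scale: "rot (c *\<^sub>R u) = c *\<^sub>R rot u"
  by (simp add: rot_def vec_eq_iff forall_2)

lemma PQ_id: assumes "u \<bullet> u = 1" shows "outer u u + outer (rot u) (rot u) = mat 1"
  using assms by (simp add: vec_eq_iff forall_2 outer_def rot_def mat_def inner2 algebra_simps power2_eq_square)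

lemma decomp: assumes "u \<bullet> u = 1" shows "x = (u \<bullet> x) *\<^sub>R u + (rot u \<bullet> x) *\<^sub>R rot u"
proof -
  have "x = mat 1 *v x" by simp
  also have "\<dots> = (u \<bullet> x) *\<^sub>R u + (rot u \<bullet> x) *\<^sub>R rot u"
    by (simp add: PQ_id[OF assms, symmetric] matrix_vector_mult_add_rdistrib outer_mv)
  finally show ?thesis .
qed

lemma parseval: assumes "u \<bullet> u = 1" shows "(u \<bullet> x)\<^sup>2 + (rot u \<bullet> x)\<^sup>2 = x \<bullet> x"
proof -
  have "x \<bullet> x = x \<bullet> ((u \<bullet> x) *\<^sub>R u + (rot u \<bullet> x) *\<^sub>R rot u)"
    using decomp[OF assms, of x] by simp
  also have "\<dots> = (u \<bullet> x)\<^sup>2 + (rot u \<bullet> x)\<^sup>2"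
    by (simp add: inner_add_right inner_commute power2_eq_square)
  finally show ?thesis by simp
qed

definition SD :: "real \<Rightarrow> real \<Rightarrow> real^2 \<Rightarrow> real^2^2" where
  "SD a b u = a *\<^sub>R outer u u + b *\<^sub>R outer (rot u) (rot u)"

lemma SD_mv: "SD a b u *v x = (a * (u \<bullet> x)) *\<^sub>R u + (b * (rot u \<bullet> x)) *\<^sub>R rot u"
  by (simp add: SD_def matrix_vector_mult_add_rdistrib scaleR_matrix_vector_assoc[symmetric] outer_mv)

lemma SD_u: assumes "u \<bullet> u = 1" shows "SD a b u *v u = a *\<^sub>R u" "SD a b u *v rot u = b *\<^sub>R rot u"
  using assms by (simp_all add: SD_mv u_rot rot_rot)

lemma SD_qf: "x \<bullet> (SD a b u *v x) = a * (u \<bullet> x)\<^sup>2 + b * (rot u \<bullet> x)\<^sup>2"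
  by (simp add: SD_mv inner_add_right inner_commute power2_eq_square)

lemma SD_symm: "transpose (SD a b u) = SD a b u"
  by (simp add: SD_def vec_eq_iff transpose_def outer_def mult_ac)

lemma SD_scale: "c *\<^sub>R SD a b u = SD (c*a) (c*b) u"
  by (simp add: SD_def algebra_simps)

lemma eig_SD: assumes u: "u \<bullet> u = 1" and "B *v u = a *\<^sub>R u" "B *v rot u = b *\<^sub>R rot u"
  shows "B = SD a b u"
proof -
  have "B = B ** mat 1" by simp
  also have "\<dots> = SD a b u"
    by (simp add: PQ_id[OF u, symmetric] matrix_add_ldistrib mm_outer assms SD_def outer_scale)
  finally show ?thesis .
qed

lemma SD_mult: assumes u: "u \<bullet> u = 1" shows "SD a b u ** SD c d u = SD (a*c) (b*d) u"
  by (rule eig_SD[OF u]) (simp_all add: matrix_vector_mul_assoc[symmetric] SD_u[OF u] matrix_vector_mult_scaleR)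

lemma mpow_SD: assumes u: "u \<bullet> u = 1" shows "mpow (SD a b u) k = SD (a^k) (b^k) u"
proof (induction k)
  case 0 then show ?case by (simp add: SD_def PQ_id[OF u])
next
  case (Suc k) then show ?case by (simp add: SD_mult[OF u])
qed

lemma mexp_SD: assumes u: "u \<bullet> u = 1" shows "mexp (SD a b u) = SD (exp a) (exp b) u"
proof -
  have e: "(\<lambda>k. (x^k / fact k)) sums exp x" for x :: real
  proof -
    have "(\<lambda>k. x^k /\<^sub>R fact k) sums exp x" by (rule exp_converges)
    then show ?thesis by (simp add: divide_inverse mult.commute)
  qed
  have "(\<lambda>k. (a^k / fact k) *\<^sub>R outer u u + (b^k / fact k) *\<^sub>R outer (rot u) (rot u)) sums
     (exp a *\<^sub>R outer u u + exp b *\<^sub>R outer (rot u) (rot u))"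
    by (intro sums_add sums_scaleR_left e)
  moreover have "(\<lambda>k. (1 / fact k) *\<^sub>R mpow (SD a b u) k) = (\<lambda>k. (a^k / fact k) *\<^sub>R outer u u + (b^k / fact k) *\<^sub>R outer (rot u) (rot u))"
    unfolding mpow_SD[OF u] by (simp add: SD_def scaleR_add_right)
  ultimately show ?thesis unfolding mexp_def SD_def by (simp add: sums_iff)
qed


lemma SD_inner_u: assumes u: "u \<bullet> u = 1"
  shows "u \<bullet> (SD a b u *v y) = a * (u \<bullet> y)" "rot u \<bullet> (SD a b u *v y) = b * (rot u \<bullet> y)"
  using u by (simp_all add: SD_mv inner_add_right u_rot rot_rot)

lemma lmax_SD: assumes u: "u \<bullet> u = 1" shows "lmax (SD a b u) = max a b"
proof -
  have "{c. \<exists>x. x \<noteq> 0 \<and> SD a b u *v x = c *\<^sub>R x} = {a, b}"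
  proof (intro equalityI subsetI)
    fix c assume "c \<in> {c. \<exists>x. x \<noteq> 0 \<and> SD a b u *v x = c *\<^sub>R x}"
    then obtain x where x: "x \<noteq> 0" "SD a b u *v x = c *\<^sub>R x" by blast
    have "a * (u \<bullet> x) = u \<bullet> (SD a b u *v x)" by (rule SD_inner_u(1)[OF u, symmetric])
    also have "\<dots> = c * (u \<bullet> x)" using x(2) by simp
    finally have 1: "a * (u \<bullet> x) = c * (u \<bullet> x)" .
    have "b * (rot u \<bullet> x) = rot u \<bullet> (SD a b u *v x)" by (rule SD_inner_u(2)[OF u, symmetric])
    also have "\<dots> = c * (rot u \<bullet> x)" using x(2) by simp
    finally have 2: "b * (rot u \<bullet> x) = c * (rot u \<bullet> x)" .
    have "u \<bullet> x \<noteq> 0 \<or> rot u \<bullet> x \<noteq> 0"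
      using decomp[OF u, of x] x(1) by auto
    then show "c \<in> {a, b}" using 1 2 by (metis insertCI mult_right_cancel)
  next
    fix c assume "c \<in> {a, b}"
    moreover have "u \<noteq> 0" "rot u \<noteq> 0" using u rot_rot[of u] by auto
    ultimately show "c \<in> {c. \<exists>x. x \<noteq> 0 \<and> SD a b u *v x = c *\<^sub>R x}"
      using SD_u[OF u, of a b] by blast
  qed
  then show ?thesis unfolding lmax_def by (simp add: max_def)
qed

lemma eigstep: assumes u: "u \<bullet> u = 1" and y: "SD (exp c) (exp d) u *v y = exp a *\<^sub>R y"
  shows "SD c d u *v y = a *\<^sub>R y"
proof -
  have "exp c * (u \<bullet> y) = u \<bullet> (SD (exp c) (exp d) u *v y)" by (rule SD_inner_u(1)[OF u, symmetric])
  also have "\<dots> = exp a * (u \<bullet> y)" using y by simp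
  finally have "exp c * (u \<bullet> y) = exp a * (u \<bullet> y)" .
  then have 1: "c * (u \<bullet> y) = a * (u \<bullet> y)" by (cases "u \<bullet> y = 0") auto
  have "exp d * (rot u \<bullet> y) = rot u \<bullet> (SD (exp c) (exp d) u *v y)" by (rule SD_inner_u(2)[OF u, symmetric])
  also have "\<dots> = exp a * (rot u \<bullet> y)" using y by simp
  finally have "exp d * (rot u \<bullet> y) = exp a * (rot u \<bullet> y)" .
  then have 2: "d * (rot u \<bullet> y) = a * (rot u \<bullet> y)" by (cases "rot u \<bullet> y = 0") auto
  have "SD c d u *v y = a *\<^sub>R ((u \<bullet> y) *\<^sub>R u + (rot u \<bullet> y) *\<^sub>R rot u)"
    by (simp add: SD_mv 1 2 scaleR_add_right)
  also have "\<dots> = a *\<^sub>R y" using decomp[OF u, of y] by simp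
  finally show ?thesis .
qed

lemma spectral: fixes B :: "real^2^2" assumes sym: "transpose B = B"
  shows "\<exists>u a b. u \<bullet> u = 1 \<and> b \<le> a \<and> B = SD a b u"
proof -
  define p q r where "p = B$1$1" and "q = B$1$2" and "r = B$2$2"
  have "transpose B $1$2 = B$1$2" using sym by simp
  then have q2: "B$2$1 = q" unfolding q_def by (simp add: transpose_def)
  have mv: "B *v x = vector [p * x$1 + q * x$2, q * x$1 + r * x$2]" for x
    by (simp add: vec_eq_iff forall_2 matrix_vector_mult_def sum_2 p_def[symmetric] q_def[symmetric] r_def[symmetric] q2)
  show ?thesis
  proof (cases "q = 0 \<and> r \<le> p")
    case True
    define u :: "real^2" where "u = vector [1, 0]"
    have u: "u \<bullet> u = 1" by (simp add: u_def inner2)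
    have "B = SD p r u"
      by (rule eig_SD[OF u]) (use True in \<open>simp_all add: mv u_def rot_def vec_eq_iff forall_2\<close>)
    then show ?thesis using u True by blast
  next
    case False
    define s where "s = sqrt (((p-r)/2)\<^sup>2 + q\<^sup>2)"
    define a where "a = (p+r)/2 + s"
    define b where "b = (p+r)/2 - s"
    have s0: "s \<ge> 0" unfolding s_def by simp
    have ss: "s\<^sup>2 = ((p-r)/2)\<^sup>2 + q\<^sup>2" unfolding s_def by simp
    have key: "q\<^sup>2 = (a-p)*(a-r)" unfolding a_def using ss by (simp add: field_simps power2_eq_square)
    define w :: "real^2" where "w = vector [q, a-p]"
    have wne: "w \<noteq> 0"
    proof
      assume "w = 0"
      then have q0: "q = 0" and ap: "a = p" by (auto simp: w_def vec_eq_iff forall_2)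
      then have "r > p" using False by auto
      have "s = \<bar>(p - r)/2\<bar>" unfolding s_def q0 by simp
      then show False using ap \<open>r > p\<close> unfolding a_def by (auto simp: abs_if field_simps split: if_splits)
    qed
    have b': "b = p + r - a" unfolding a_def b_def by simp
    have k2: "q * q = (a-p)*(a-r)" using key by (simp add: power2_eq_square)
    have c1: "p * q + q * (a - p) = a * q" by algebra
    have c2: "q * q + r * (a - p) = a * (a - p)" using k2 by algebra
    have c3: "p * (p - a) + q * q = b * (p - a)" using k2 b' by algebra
    have c4: "q * (p - a) + r * q = b * q" using b' by algebra
    have Bw: "B *v w = a *\<^sub>R w"
      unfolding mv w_def by (simp add: vec_eq_iff forall_2 c1 c2)
    have Brw: "B *v rot w = b *\<^sub>R rot w"
      unfolding mv w_def rot_def by (simp add: vec_eq_iff forall_2 c3 c4)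
    define u where "u = (1 / norm w) *\<^sub>R w"
    have u: "u \<bullet> u = 1" using wne by (simp add: u_def dot_square_norm power2_eq_square)
    have "B = SD a b u"
      by (rule eig_SD[OF u]) (simp_all add: u_def rot_scale matrix_vector_mult_scaleR Bw Brw)
    moreover have "b \<le> a" unfolding a_def b_def using s0 by simp
    ultimately show ?thesis using u by blast
  qed
qed

lemma log_unique: assumes u: "u \<bullet> u = 1" and sym: "transpose B = B" and e: "mexp B = SD (exp a) (exp b) u"
  shows "B = SD a b u"
proof -
  obtain u' c d where u': "u' \<bullet> u' = 1" and B: "B = SD c d u'" using spectral[OF sym] by blast
  have E: "SD (exp c) (exp d) u' = SD (exp a) (exp b) u" using e mexp_SD[OF u'] B by simp
  show ?thesis
    by (rule eig_SD[OF u]) (simp_all add: B eigstep[OF u'] E SD_u[OF u])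
qed

lemma mlog_SD: assumes u: "u \<bullet> u = 1" shows "mlog (SD (exp a) (exp b) u) = SD a b u"
  unfolding mlog_def
proof (rule the_equality)
  show "transpose (SD a b u) = SD a b u \<and> mexp (SD a b u) = SD (exp a) (exp b) u"
    by (simp add: SD_symm mexp_SD[OF u])
  fix B assume "transpose B = B \<and> mexp B = SD (exp a) (exp b) u"
  then show "B = SD a b u" using log_unique[OF u] by blast
qed


lemma transpose_add: "transpose (A + B) = transpose A + transpose (B::real^2^2)"
  by (simp add: transpose_def vec_eq_iff)

lemma transpose_zero: "transpose (0::real^2^2) = 0"
  by (simp add: transpose_def vec_eq_iff)

lemma transpose_sum_sym: "finite I \<Longrightarrow> (\<forall>i\<in>I. transpose (M i) = (M i :: real^2^2)) \<Longrightarrow>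
   transpose (\<Sum>i\<in>I. M i) = (\<Sum>i\<in>I. M i)"
  by (induction rule: finite_induct) (simp_all add: transpose_add transpose_zero)

lemma sum_mv: "finite I \<Longrightarrow> (\<Sum>i\<in>I. M i) *v (y::real^2) = (\<Sum>i\<in>I. M i *v y)"
  by (induction rule: finite_induct) (simp_all add: matrix_vector_mult_add_rdistrib)

lemma tb_upper: fixes A B C s t :: real
  assumes "A \<le> C" "B \<le> C" "0 \<le> s" "0 \<le> t" "s + t = 1" shows "A * s + B * t \<le> C"
proof -
  have "A * s \<le> C * s" "B * t \<le> C * t" using assms by (simp_all add: mult_right_mono)
  then have "A * s + B * t \<le> C*(s+t)" by (simp add: algebra_simps)
  then show ?thesis using assms by simp
qed

lemma tb_lower: fixes A B C s t :: real
  assumes "C \<le> A" "C \<le> B" "0 \<le> s" "0 \<le> t" "s + t = 1" shows "C \<le> A * s + B * t"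
proof -
  have "C * s \<le> A * s" "C * t \<le> B * t" using assms by (simp_all add: mult_right_mono)
  then have "C*(s+t) \<le> A * s + B * t" by (simp add: algebra_simps)
  then show ?thesis using assms by simp
qed

lemma norm_unit: "u \<bullet> u = 1 \<Longrightarrow> norm u = 1"
  by (simp add: norm_eq_sqrt_inner)

lemma unit_inner_le: assumes u: "u \<bullet> u = 1" and y: "y \<bullet> y = 1"
  shows "\<bar>u \<bullet> y\<bar> \<le> 1" "\<bar>rot u \<bullet> y\<bar> \<le> 1"
proof -
  have p: "(u \<bullet> y)\<^sup>2 + (rot u \<bullet> y)\<^sup>2 = 1" using parseval[OF u, of y] y by simp
  have "(u \<bullet> y)\<^sup>2 \<le> 1" "(rot u \<bullet> y)\<^sup>2 \<le> 1" using p zero_le_power2[of "u \<bullet> y"] zero_le_power2[of "rot u \<bullet> y"] by linarith+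
  then have a: "(u \<bullet> y)\<^sup>2 \<le> 1\<^sup>2" "(rot u \<bullet> y)\<^sup>2 \<le> 1\<^sup>2" by simp_all
  have "\<bar>u \<bullet> y\<bar> \<le> \<bar>1::real\<bar>" using abs_le_square_iff a(1) by blast
  then show "\<bar>u \<bullet> y\<bar> \<le> 1" by simp
  have "\<bar>rot u \<bullet> y\<bar> \<le> \<bar>1::real\<bar>" using abs_le_square_iff a(2) by blast
  then show "\<bar>rot u \<bullet> y\<bar> \<le> 1" by simp
qed

lemma approx: assumes u: "u \<bullet> u = 1" and y: "y \<bullet> y = 1"
  shows "norm (SD a b u *v y - c *\<^sub>R y) \<le> \<bar>a - c\<bar> + \<bar>b - c\<bar> * \<bar>rot u \<bullet> y\<bar>"
proof -
  have yd: "y = (u \<bullet> y) *\<^sub>R u + (rot u \<bullet> y) *\<^sub>R rot u" by (rule decomp[OF u])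
  have "c *\<^sub>R y = c *\<^sub>R ((u \<bullet> y) *\<^sub>R u + (rot u \<bullet> y) *\<^sub>R rot u)"
    by (rule arg_cong[where f="\<lambda>z. c *\<^sub>R z", OF yd])
  then have "SD a b u *v y - c *\<^sub>R y = ((a-c)*(u \<bullet> y)) *\<^sub>R u + ((b-c)*(rot u \<bullet> y)) *\<^sub>R rot u"
    by (simp add: SD_mv algebra_simps)
  also have "norm \<dots> \<le> norm (((a-c)*(u \<bullet> y)) *\<^sub>R u) + norm (((b-c)*(rot u \<bullet> y)) *\<^sub>R rot u)"
    by (rule norm_triangle_ineq)
  also have "\<dots> = \<bar>a-c\<bar> * \<bar>u \<bullet> y\<bar> + \<bar>b-c\<bar> * \<bar>rot u \<bullet> y\<bar>"
    using norm_unit[OF u] norm_unit[of "rot u"] u by (simp add: rot_rot abs_mult)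
  also have "\<dots> \<le> \<bar>a-c\<bar> + \<bar>b-c\<bar> * \<bar>rot u \<bullet> y\<bar>"
    using unit_inner_le[OF u y] by (simp add: mult_left_le)
  finally show ?thesis .
qed


theorem lemma2:
  fixes n :: nat and X :: "nat \<Rightarrow> real^2^2" and lam mu phi :: "nat \<Rightarrow> real"
  assumes n: "n \<ge> 1"
    and spec: "\<And>i. i \<in> {1..n} \<Longrightarrow>
        X i = lam i *\<^sub>R outer (uvec (phi i)) (uvec (phi i))
            + mu i *\<^sub>R outer (vvec (phi i)) (vvec (phi i))"
    and ord: "\<And>i. i \<in> {1..n} \<Longrightarrow> mu i \<le> lam i"
    and phi: "\<And>i. i \<in> {1..n} \<Longrightarrow> phi i \<in> {- pi / 2 .. pi / 2}"
    and largest: "\<forall>x \<in># (\<Sum>i\<in>{1..n}. {#lam i, mu i#}). x \<le> lam 1"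
    and unique: "count (\<Sum>i\<in>{1..n}. {#lam i, mu i#}) (lam 1) = 1"
    and u1: "uvec (phi 1) = e1" and v1: "vvec (phi 1) = e2"
  shows "(\<lambda>m::nat. lmax ((1 / real m) *\<^sub>R mlog (\<Sum>i\<in>{1..n}. mexp (real m *\<^sub>R X i))))
           \<longlonglongrightarrow> lam 1 \<and>
         (\<forall>S. (\<lambda>m::nat. (1 / real m) *\<^sub>R mlog (\<Sum>i\<in>{1..n}. mexp (real m *\<^sub>R X i)))
           \<longlonglongrightarrow> S \<longrightarrow> S *v e1 = lam 1 *\<^sub>R e1)"
proof -
  define U where "U i = uvec (phi i)" for i
  have Uu: "U i \<bullet> U i = 1" for i
    by (simp add: U_def uvec_def inner2 power2_eq_square[symmetric])
  have rU: "rot (uvec (phi i)) = vvec (phi i)" for i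
    by (simp add: uvec_def vvec_def rot_def vec_eq_iff forall_2)
  have XSD: "X i = SD (lam i) (mu i) (U i)" if "i \<in> {1..n}" for i
    using spec[OF that] by (simp add: SD_def U_def rU)
  have U1: "U 1 = e1" using u1 by (simp add: U_def)
  have re1: "rot e1 = e2" by (simp add: e1_def e2_def rot_def vec_eq_iff forall_2)
  have e11: "e1 \<bullet> e1 = 1" "e2 \<bullet> e2 = 1" "e1 \<bullet> e2 = 0" "e2 \<bullet> e1 = 0"
    by (simp_all add: e1_def e2_def inner2)

  define M where "M = (\<Sum>i\<in>{1..n}. {#lam i, mu i#})"
  have cnt: "count M x = (\<Sum>i\<in>{1..n}. count {#lam i, mu i#} x)" for x
    by (simp add: M_def count_sum)
  have inM: "lam i \<in># M \<and> mu i \<in># M" if "i \<in> {1..n}" for i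
  proof -
    have "0 < count {#lam i, mu i#} (lam i)" by simp
    also have "\<dots> \<le> count M (lam i)" unfolding cnt using that by (intro member_le_sum) auto
    finally have 1: "lam i \<in># M" by simp
    have "0 < count {#lam i, mu i#} (mu i)" by simp
    also have "\<dots> \<le> count M (mu i)" unfolding cnt using that by (intro member_le_sum) auto
    finally have 2: "mu i \<in># M" by simp
    show ?thesis using 1 2 by simp
  qed
  have le: "lam i \<le> lam 1 \<and> mu i \<le> lam 1" if "i \<in> {1..n}" for i
    using inM[OF that] largest unfolding M_def by auto
  have split: "count M (lam 1) = count {#lam 1, mu 1#} (lam 1) + (\<Sum>i\<in>{2..n}. count {#lam i, mu i#} (lam 1))"
  proof -
    have I: "{1..n} = insert 1 {2..n}" using n by auto
    show ?thesis unfolding cnt I by (rule sum.insert) auto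
  qed
  have c1: "count M (lam 1) = 1" using unique unfolding M_def .
  have "count {#lam 1, mu 1#} (lam 1) \<ge> 1" by simp
  then have c1a: "count {#lam 1, mu 1#} (lam 1) = 1" and c1b: "(\<Sum>i\<in>{2..n}. count {#lam i, mu i#} (lam 1)) = 0"
    using split c1 by linarith+
  have mu1: "mu 1 < lam 1"
  proof -
    have "mu 1 \<noteq> lam 1" using c1a by (auto split: if_splits)
    then show ?thesis using le[of 1] n by auto
  qed
  have others: "lam i < lam 1 \<and> mu i < lam 1" if "i \<in> {2..n}" for i
  proof -
    have "count {#lam i, mu i#} (lam 1) = 0" using c1b that by simp
    then have "lam i \<noteq> lam 1" "mu i \<noteq> lam 1" by (auto split: if_splits)
    moreover have "i \<in> {1..n}" using that by auto
    ultimately show ?thesis using le by force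
  qed
  define L where "L = insert (mu 1) (lam ` {2..n} \<union> mu ` {2..n})"
  define lp where "lp = Max L"
  have finL: "finite L" "L \<noteq> {}" unfolding L_def by auto
  have lp_lt: "lp < lam 1" unfolding lp_def using finL
  proof (subst Max_less_iff)
    show "\<forall>a\<in>L. a < lam 1" unfolding L_def using mu1 others by blast
  qed auto
  have lp_ge: "mu 1 \<le> lp" "\<And>i. i \<in> {2..n} \<Longrightarrow> lam i \<le> lp \<and> mu i \<le> lp"
  proof -
    show "mu 1 \<le> lp" unfolding lp_def using finL by (intro Max_ge) (auto simp: L_def)
    fix i assume "i \<in> {2..n}"
    then have "lam i \<in> L" "mu i \<in> L" unfolding L_def by auto
    then show "lam i \<le> lp \<and> mu i \<le> lp" unfolding lp_def using finL by (simp add: Max_ge)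
  qed

  define E where "E m = (\<Sum>i\<in>{1..n}. mexp (real m *\<^sub>R X i))" for m :: nat
  have Esd: "E m = (\<Sum>i\<in>{1..n}. SD (exp (m * lam i)) (exp (m * mu i)) (U i))" for m
    unfolding E_def by (rule sum.cong) (simp_all add: XSD SD_scale mexp_SD[OF Uu])
  have Esym: "transpose (E m) = E m" for m
    unfolding Esd by (rule transpose_sum_sym) (simp_all add: SD_symm)
  define T where "T m i y = exp (m * lam i) * (U i \<bullet> y)\<^sup>2 + exp (m * mu i) * (rot (U i) \<bullet> y)\<^sup>2" for m :: nat and i y
  have qf: "y \<bullet> (E m *v y) = (\<Sum>i\<in>{1..n}. T m i y)" for m y
    by (simp add: Esd sum_mv inner_sum_right SD_qf T_def)
  have T1: "T m 1 y = exp (m * lam 1) * (e1 \<bullet> y)\<^sup>2 + exp (m * mu 1) * (e2 \<bullet> y)\<^sup>2" for m y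
    by (simp only: T_def U1 re1)
  have T1s: "T m (Suc 0) y = exp (m * lam 1) * (e1 \<bullet> y)\<^sup>2 + exp (m * mu 1) * (e2 \<bullet> y)\<^sup>2" for m y
    using T1 by simp
  have Tnn: "0 \<le> T m i y" for m i y by (simp add: T_def)
  have Tup: "T m i y \<le> exp (m * lam 1)" if "i \<in> {1..n}" "y \<bullet> y = 1" for m i y
  proof -
    have "real m * lam i \<le> real m * lam 1" "real m * mu i \<le> real m * lam 1"
      using le[OF that(1)] by (simp_all add: mult_left_mono)
    then show ?thesis unfolding T_def using parseval[OF Uu, of i y] that(2) by (intro tb_upper) auto
  qed
  have Te2: "T m i e2 \<le> exp (m * lp)" if "i \<in> {1..n}" for m i
  proof (cases "i = 1")
    case True
    have "real m * mu 1 \<le> real m * lp" using lp_ge(1) by (simp add: mult_left_mono)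
    then show ?thesis using True by (simp add: T1 T1s e11)
  next
    case False
    then have i2: "i \<in> {2..n}" using that by auto
    have "real m * lam i \<le> real m * lp" "real m * mu i \<le> real m * lp"
      using lp_ge(2)[OF i2] by (simp_all add: mult_left_mono)
    then show ?thesis unfolding T_def using parseval[OF Uu, of i e2] e11 by (intro tb_upper) auto
  qed
  have Sup: "y \<bullet> (E m *v y) \<le> n * exp (m * lam 1)" if "y \<bullet> y = 1" for m y
  proof -
    have "(\<Sum>i\<in>{1..n}. T m i y) \<le> of_nat (card {1..n}) * exp (m * lam 1)"
      by (rule sum_bounded_above) (use Tup that in auto)
    then show ?thesis by (simp add: qf)
  qed
  have Se2: "e2 \<bullet> (E m *v e2) \<le> n * exp (m * lp)" for m
  proof -
    have "(\<Sum>i\<in>{1..n}. T m i e2) \<le> of_nat (card {1..n}) * exp (m * lp)"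
      by (rule sum_bounded_above) (use Te2 in auto)
    then show ?thesis by (simp add: qf)
  qed
  have Sge1: "T m 1 y \<le> y \<bullet> (E m *v y)" for m y
    unfolding qf using n by (intro member_le_sum) (auto simp: Tnn)

  have per_m: "\<forall>m. \<exists>u a b. m \<ge> 1 \<longrightarrow> (u \<bullet> u = 1 \<and> mlog (E m) = SD a b u \<and> b \<le> a \<and>
      lam 1 \<le> a / m \<and> a / m \<le> lam 1 + ln n / m \<and> mu 1 \<le> b / m \<and> b / m \<le> lam 1 + ln n \<and>
      (rot u \<bullet> e1)\<^sup>2 \<le> n * exp (m * (lp - lam 1)))"
  proof
    fix m :: nat
    show "\<exists>u a b. m \<ge> 1 \<longrightarrow> (u \<bullet> u = 1 \<and> mlog (E m) = SD a b u \<and> b \<le> a \<and>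
      lam 1 \<le> a / m \<and> a / m \<le> lam 1 + ln n / m \<and> mu 1 \<le> b / m \<and> b / m \<le> lam 1 + ln n \<and>
      (rot u \<bullet> e1)\<^sup>2 \<le> n * exp (m * (lp - lam 1)))"
    proof (cases "m \<ge> 1")
      case False then show ?thesis by blast
    next
      case True
      then have m0: "real m > 0" "real m \<ge> 1" by auto
      obtain u \<alpha> \<beta> where u: "u \<bullet> u = 1" and ba: "\<beta> \<le> \<alpha>" and Eq: "E m = SD \<alpha> \<beta> u"
        using spectral[OF Esym[of m]] by blast
      have ru: "rot u \<bullet> rot u = 1" using u by (simp add: rot_rot)
      have al: "u \<bullet> (E m *v u) = \<alpha>" using u by (simp add: Eq SD_qf u_rot)
      have be: "rot u \<bullet> (E m *v rot u) = \<beta>" using u by (simp add: Eq SD_qf u_rot rot_rot)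
      have q1: "e1 \<bullet> (E m *v e1) \<le> \<alpha>"
        unfolding Eq SD_qf using parseval[OF u, of e1] e11 ba by (intro tb_upper) auto
      have q2: "\<beta> \<le> e2 \<bullet> (E m *v e2)"
        unfolding Eq SD_qf using parseval[OF u, of e2] e11 ba by (intro tb_lower) auto
      have "T m 1 e1 = exp (m * lam 1)" by (simp add: T1 T1s e11)
      then have alo: "exp (m * lam 1) \<le> \<alpha>" using Sge1[of m e1] q1 by simp
      have ahi: "\<alpha> \<le> n * exp (m * lam 1)" using Sup[OF u, of m] al by simp
      have "exp (m * mu 1) \<le> T m 1 (rot u)"
      proof -
        have "real m * mu 1 \<le> real m * lam 1" using mu1 by (simp add: mult_left_mono)
        then show ?thesis unfolding T1 using parseval[OF e11(1), of "rot u"] re1 ru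
          by (intro tb_lower) (auto simp: inner_commute)
      qed
      then have blo: "exp (m * mu 1) \<le> \<beta>" using Sge1[of m "rot u"] be by simp
      have "exp (m * lam 1) * (e1 \<bullet> rot u)\<^sup>2 \<le> T m 1 (rot u)" unfolding T1 by (simp add: T1s)
      then have "exp (m * lam 1) * (e1 \<bullet> rot u)\<^sup>2 \<le> n * exp (m * lp)"
        using Sge1[of m "rot u"] be q2 Se2[of m] by linarith
      then have "(e1 \<bullet> rot u)\<^sup>2 \<le> n * exp (m * lp) / exp (m * lam 1)"
        by (simp add: field_simps)
      also have "\<dots> = n * exp (m * (lp - lam 1))"
        by (simp add: exp_diff right_diff_distrib)
      finally have rb: "(rot u \<bullet> e1)\<^sup>2 \<le> n * exp (m * (lp - lam 1))" by (simp add: inner_commute)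
      have apos: "\<alpha> > 0" and bpos: "\<beta> > 0" using alo blo exp_gt_zero[of "m * lam 1"] exp_gt_zero[of "m * mu 1"] by linarith+
      define a where "a = ln \<alpha>"
      define b where "b = ln \<beta>"
      have "E m = SD (exp a) (exp b) u" using apos bpos by (simp add: a_def b_def Eq)
      then have ml: "mlog (E m) = SD a b u" by (simp add: mlog_SD[OF u])
      have bla: "b \<le> a" unfolding a_def b_def using ba bpos by simp
      have "ln (exp (m * lam 1)) \<le> a" unfolding a_def using alo apos by (subst ln_le_cancel_iff) auto
      then have alo': "m * lam 1 \<le> a" by simp
      have "a \<le> ln (n * exp (m * lam 1))" unfolding a_def using ahi apos by (subst ln_le_cancel_iff) auto
      also have "\<dots> = ln n + m * lam 1" using n by (simp add: ln_mult)
      finally have ahi': "a \<le> ln n + m * lam 1" .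
      have "ln (exp (m * mu 1)) \<le> b" unfolding b_def using blo bpos by (subst ln_le_cancel_iff) auto
      then have blo': "m * mu 1 \<le> b" by simp
      have lnn: "ln (real n) \<ge> 0" using n by simp
      have g1: "lam 1 \<le> a / m" using alo' m0 by (simp add: field_simps)
      have g2: "a / m \<le> lam 1 + ln n / m" using ahi' m0 by (simp add: field_simps)
      have g3: "mu 1 \<le> b / m" using blo' m0 by (simp add: field_simps)
      have "ln n \<le> m * ln n" using lnn m0 by (simp add: mult_le_cancel_right1)
      then have "b \<le> m * (lam 1 + ln n)" using bla ahi' by (simp add: algebra_simps)
      then have g4: "b / m \<le> lam 1 + ln n" using m0 by (simp add: field_simps)
      show ?thesis using u ml bla g1 g2 g3 g4 rb by blast
    qed
  qed
  then obtain uu aa bb where P: "\<And>m. m \<ge> 1 \<Longrightarrow> (uu m \<bullet> uu m = 1 \<and> mlog (E m) = SD (aa m) (bb m) (uu m) \<and> bb m \<le> aa m \<and>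
      lam 1 \<le> aa m / m \<and> aa m / m \<le> lam 1 + ln n / m \<and> mu 1 \<le> bb m / m \<and> bb m / m \<le> lam 1 + ln n \<and>
      (rot (uu m) \<bullet> e1)\<^sup>2 \<le> n * exp (m * (lp - lam 1)))"
    by metis
  define F where "F m = (1 / real m) *\<^sub>R mlog (E m)" for m :: nat
  have FSD: "F m = SD (aa m / m) (bb m / m) (uu m)" if "m \<ge> 1" for m
    using P[OF that] by (simp add: F_def SD_scale)
  have lmaxF: "lmax (F m) = aa m / m" if "m \<ge> 1" for m
  proof -
    have "bb m / m \<le> aa m / m" using P[OF that] by (simp add: divide_right_mono)
    then show ?thesis using P[OF that] by (simp add: FSD[OF that] lmax_SD max_def)
  qed
  have L1: "(\<lambda>m. lmax (F m)) \<longlonglongrightarrow> lam 1"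
  proof (rule tendsto_sandwich[of "\<lambda>m. lam 1" _ _ "\<lambda>m. lam 1 + ln n / real m"])
    show "eventually (\<lambda>m. lam 1 \<le> lmax (F m)) sequentially"
      using eventually_ge_at_top[of "1::nat"] by eventually_elim (use P lmaxF in auto)
    show "eventually (\<lambda>m. lmax (F m) \<le> lam 1 + ln n / real m) sequentially"
      using eventually_ge_at_top[of "1::nat"] by eventually_elim (use P lmaxF in auto)
    show "(\<lambda>m. lam 1) \<longlonglongrightarrow> lam 1" by simp
    show "(\<lambda>m. lam 1 + ln n / real m) \<longlonglongrightarrow> lam 1"
      using tendsto_add[OF tendsto_const lim_const_over_n[of "ln n"]] by simp
  qed
  have L2: "S *v e1 = lam 1 *\<^sub>R e1" if FS: "F \<longlonglongrightarrow> S" for S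
  proof -
    have bl: "bounded_linear (\<lambda>M::real^2^2. M *v e1)"
      by (subst linear_conv_bounded_linear[symmetric])
         (rule linearI; simp add: matrix_vector_mult_add_rdistrib scaleR_matrix_vector_assoc)
    have lim1: "(\<lambda>m. F m *v e1) \<longlonglongrightarrow> S *v e1" using bounded_linear.tendsto[OF bl FS] .
    define d where "d = lp - lam 1"
    have d0: "d < 0" using lp_lt by (simp add: d_def)
    define K where "K = lam 1 - mu 1 + ln n"
    define g where "g m = ln n / real m + K * sqrt (n * exp (real m * d))" for m :: nat
    have "(\<lambda>m. exp d ^ m) \<longlonglongrightarrow> 0" by (rule LIMSEQ_power_zero) (use d0 in simp)
    then have "(\<lambda>m. exp (real m * d)) \<longlonglongrightarrow> 0" by (simp add: exp_of_nat_mult)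
    then have "(\<lambda>m. sqrt (n * exp (real m * d))) \<longlonglongrightarrow> sqrt (real n * 0)"
      by (intro tendsto_real_sqrt tendsto_mult tendsto_const)
    then have "(\<lambda>m. K * sqrt (n * exp (real m * d))) \<longlonglongrightarrow> K * 0"
      by (intro tendsto_mult tendsto_const) simp
    then have g0: "g \<longlonglongrightarrow> 0"
      using tendsto_add[OF lim_const_over_n[of "ln n"]] unfolding g_def by fastforce
    have lnn: "ln (real n) \<ge> 0" using n by simp
    have bound: "eventually (\<lambda>m. norm (F m *v e1 - lam 1 *\<^sub>R e1) \<le> g m) sequentially"
      using eventually_ge_at_top[of "1::nat"]
    proof eventually_elim
      case (elim m)
      note Pm = P[OF elim]
      have u: "uu m \<bullet> uu m = 1" using Pm by blast
      have "norm (F m *v e1 - lam 1 *\<^sub>R e1) \<le> \<bar>aa m / m - lam 1\<bar> + \<bar>bb m / m - lam 1\<bar> * \<bar>rot (uu m) \<bullet> e1\<bar>"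
        unfolding FSD[OF elim] by (rule approx[OF u e11(1)])
      also have "\<dots> \<le> ln n / real m + K * sqrt (n * exp (real m * d))"
      proof (rule add_mono)
        show "\<bar>aa m / m - lam 1\<bar> \<le> ln n / real m" using Pm by auto
        have k: "\<bar>bb m / m - lam 1\<bar> \<le> K" using Pm mu1 lnn unfolding K_def by auto
        have "\<bar>rot (uu m) \<bullet> e1\<bar> = sqrt ((rot (uu m) \<bullet> e1)\<^sup>2)" by simp
        also have "\<dots> \<le> sqrt (n * exp (real m * d))"
          using Pm by (intro real_sqrt_le_mono) (simp add: d_def)
        finally have s: "\<bar>rot (uu m) \<bullet> e1\<bar> \<le> sqrt (n * exp (real m * d))" .
        show "\<bar>bb m / m - lam 1\<bar> * \<bar>rot (uu m) \<bullet> e1\<bar> \<le> K * sqrt (n * exp (real m * d))"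
          by (rule mult_mono[OF k s]) (use k in auto)
      qed
      finally show ?case unfolding g_def .
    qed
    have "(\<lambda>m. F m *v e1 - lam 1 *\<^sub>R e1) \<longlonglongrightarrow> 0" by (rule Lim_null_comparison[OF bound g0])
    then have lim2: "(\<lambda>m. F m *v e1) \<longlonglongrightarrow> lam 1 *\<^sub>R e1" by (simp add: LIM_zero_iff)
    show ?thesis using LIMSEQ_unique[OF lim1 lim2] .
  qed
  have FF: "(\<lambda>m::nat. (1 / real m) *\<^sub>R mlog (\<Sum>i\<in>{1..n}. mexp (real m *\<^sub>R X i))) = F"
    by (rule ext) (simp only: F_def E_def)
  have FF2: "(\<lambda>m::nat. lmax ((1 / real m) *\<^sub>R mlog (\<Sum>i\<in>{1..n}. mexp (real m *\<^sub>R X i)))) = (\<lambda>m. lmax (F m))"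
    by (rule ext) (simp only: F_def E_def)
  show ?thesis unfolding FF2 FF using L1 L2 by blast
qed

end
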